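(* Let $\Pi_n\sim ESC_{[n]}(P_{\boldsymbol{\mu}})$ with $\mu_1>0$ $P_{\boldsymbol{\mu}}$-a.s., and let $\mathbf{z}=(z_1,\dots,z_n)$ be cluster allocation variables of $\Pi_n$. Fix $i\in\{1,\dots,n\}$, let $\mathbf{z}_{-i}$ denote the allocations of the other $n-1$ points, let $k_{-i}$ be the number of clusters of $\mathbf{z}_{-i}$ (labelled $1,\dots,k_{-i}$) and let $s_j$ be the number of points $i'\ne i$ in cluster $j$. Then $$\mathbb{P}(z_i=j\mid\mathbf{z}_{-i},\boldsymbol{\mu})\propto\begin{cases}(s_j+1)\dfrac{\mu_{s_j+1}}{\mu_{s_j}}, & j=1,\dots,k_{-i},\\[2mm] (k_{-i}+1)\,\mu_1, & j=k_{-i}+1\ \text{(a new cluster)},\end{cases}$$ where the proportionality constant does not depend on $j$.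
   Context: The ESC model $ESC_{[n]}(P_{\boldsymbol{\mu}})$: $P_{\boldsymbol{\mu}}$ is a distribution on probability distributions $\boldsymbol{\mu}=(\mu_s)_{s\ge1}$ on $\{1,2,\dots\}$. Sample $\boldsymbol{\mu}\sim P_{\boldsymbol{\mu}}$ and, given $\boldsymbol{\mu}$, $S_1,S_2,\dots$ i.i.d. with law $\boldsymbol{\mu}$. Let $E_n$ be the event that some partial sum $\sum_{j=1}^k S_j$ equals $n$; everything is conditioned on $E_n$. On $E_n$, $K$ is the unique integer with $\sum_{j=1}^K S_j=n$, and $(z_1,\dots,z_n)$ is a uniformly random permutation of the vector with $S_1$ copies of $1$, ..., $S_K$ copies of $K$; $\Pi_n$ is the partition of $[n]$ with blocks $\{i:z_i=j\}$. Cluster labels are regarded as exchangeable, i.e. the statement concerns the induced partition of $[n]$ (which cluster of $\mathbf{z}_{-i}$ point $i$ joins, or whether it forms a new singleton). *)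

theory Defs
  imports "HOL-Probability.Probability" "HOL-Combinatorics.Permutations"
    "HOL-Library.Disjoint_Sets"
begin

text \<open>ESC model, conditionally on a fixed cluster-size distribution mu (a pmf on
  the positive integers).  Points are 1..n.\<close>

text \<open>Possible values of (S_1,...,S_K) on the event E_n: sequences of positive
  integers summing to n.  Given mu, the probability that the i.i.d. draws start with
  exactly these values is the product of the pmf values.\<close>
definition esc_comps :: "nat \<Rightarrow> nat list set" where
  "esc_comps n = {ss. (\<forall>s\<in>set ss. 0 < s) \<and> sum_list ss = n}"

definition esc_seq_weight :: "nat pmf \<Rightarrow> nat list \<Rightarrow> real" where
  "esc_seq_weight mu ss = prod_list (map (pmf mu) ss)"

definition esc_PE :: "nat pmf \<Rightarrow> nat \<Rightarrow> real" where
  "esc_PE mu n = (\<Sum>ss\<in>esc_comps n. esc_seq_weight mu ss)"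

definition esc_label_vec :: "nat list \<Rightarrow> nat list" where
  "esc_label_vec ss = concat (map (\<lambda>j. replicate (ss ! j) (Suc j)) [0..<length ss])"

text \<open>Uniformly random permutation of that vector: z_p = w_(sigma p), sigma a uniform
  permutation of the positions {1..n}; the induced partition of {1..n}.\<close>
definition esc_partition :: "nat \<Rightarrow> nat list \<Rightarrow> (nat \<Rightarrow> nat) \<Rightarrow> nat set set" where
  "esc_partition n ss \<sigma> =
     (\<lambda>j. {p \<in> {1..n}. esc_label_vec ss ! (\<sigma> p - 1) = j}) ` {1..length ss}"

definition esc_perm_pmf :: "nat \<Rightarrow> (nat \<Rightarrow> nat) pmf" where
  "esc_perm_pmf n = pmf_of_set {\<sigma>. \<sigma> permutes {1..n}}"

text \<open>P(Pi_n = pi | mu), conditioned on E_n.\<close>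
definition esc_prob :: "nat pmf \<Rightarrow> nat \<Rightarrow> nat set set \<Rightarrow> real" where
  "esc_prob mu n \<pi> =
     (\<Sum>ss\<in>esc_comps n. esc_seq_weight mu ss *
        measure_pmf.prob (esc_perm_pmf n) {\<sigma>. esc_partition n ss \<sigma> = \<pi>}) / esc_PE mu n"

definition remove_point :: "nat \<Rightarrow> nat set set \<Rightarrow> nat set set" where
  "remove_point i \<pi> = (\<lambda>B. B - {i}) ` \<pi> - {{}}"

definition esc_prob_rest :: "nat pmf \<Rightarrow> nat \<Rightarrow> nat \<Rightarrow> nat set set \<Rightarrow> real" where
  "esc_prob_rest mu n i \<rho> =
     (\<Sum>\<pi>\<in>{\<pi>. partition_on {1..n} \<pi> \<and> remove_point i \<pi> = \<rho>}. esc_prob mu n \<pi>)"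

definition esc_cond :: "nat pmf \<Rightarrow> nat \<Rightarrow> nat \<Rightarrow> nat set set \<Rightarrow> nat set set \<Rightarrow> real" where
  "esc_cond mu n i \<rho> \<pi> =
     (if remove_point i \<pi> = \<rho> then esc_prob mu n \<pi> else 0) / esc_prob_rest mu n i \<rho>"

end

theory Submission imports Defs "HOL-Combinatorics.Multiset_Permutations"
begin

fun pdisj :: "'a set list \<Rightarrow> bool" where
  "pdisj [] = True"
| "pdisj (A#As) = (A \<inter> \<Union>(set As) = {} \<and> pdisj As)"

lemma card_bij_id_out:
  assumes "finite A" "finite B" "card A = card B"
  shows "card {g. (\<forall>x. x \<notin> A \<longrightarrow> g x = x) \<and> g ` A = B} = fact (card A)"
proof -
  obtain \<phi> where phi: "bij_betw \<phi> A B" using finite_same_card_bij assms by blast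
  let ?M = "\<lambda>p x. if x \<in> A then \<phi> (p x) else x"
  have eq: "{g. (\<forall>x. x \<notin> A \<longrightarrow> g x = x) \<and> g ` A = B} = ?M ` {p. p permutes A}"
  proof (intro equalityI subsetI)
    fix g assume "g \<in> {g. (\<forall>x. x \<notin> A \<longrightarrow> g x = x) \<and> g ` A = B}"
    hence g1: "\<forall>x. x \<notin> A \<longrightarrow> g x = x" and g2: "g ` A = B" by auto
    have "inj_on g A" by (rule eq_card_imp_inj_on[OF assms(1)]) (use g2 assms(3) in simp)
    hence bg: "bij_betw g A B" using g2 by (simp add: bij_betw_def)
    let ?p = "\<lambda>x. if x \<in> A then inv_into A \<phi> (g x) else x"
    have "bij_betw (inv_into A \<phi> \<circ> g) A A"
      using bij_betw_trans[OF bg bij_betw_inv_into[OF phi]] .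
    moreover have "\<And>a. a \<in> A \<Longrightarrow> ?p a = (inv_into A \<phi> \<circ> g) a" by simp
    ultimately have "bij_betw ?p A A" using bij_betw_cong[of A ?p "inv_into A \<phi> \<circ> g" A] by blast
    hence pp: "?p permutes A" by (rule bij_imp_permutes) simp
    have "?M ?p = g"
    proof
      fix x show "?M ?p x = g x"
      proof (cases "x \<in> A")
        case True
        hence "g x \<in> \<phi> ` A" using g2 phi by (auto simp: bij_betw_def)
        thus ?thesis using True by (simp add: f_inv_into_f)
      next
        case False thus ?thesis using g1 by simp
      qed
    qed
    hence e: "g = ?M ?p" by simp
    show "g \<in> ?M ` {p. p permutes A}" 
      by (rule image_eqI[where x="?p" and f="?M", OF e]) (use pp in simp)
  next
    fix g assume "g \<in> ?M ` {p. p permutes A}"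
    then obtain p where pp: "p permutes A" and g: "g = ?M p" by auto
    have "g ` A = (\<phi> \<circ> p) ` A" unfolding g by (rule image_cong) auto
    hence "g ` A = \<phi> ` (p ` A)" by (simp add: image_comp)
    also have "\<dots> = B" using permutes_image[OF pp] phi by (simp add: bij_betw_def)
    finally show "g \<in> {g. (\<forall>x. x \<notin> A \<longrightarrow> g x = x) \<and> g ` A = B}" using g by auto
  qed
  have inj: "inj_on ?M {p. p permutes A}"
  proof (rule inj_onI)
    fix p q assume p: "p \<in> {p. p permutes A}" and q: "q \<in> {p. p permutes A}" and e: "?M p = ?M q"
    show "p = q"
    proof
      fix x show "p x = q x"
      proof (cases "x \<in> A")
        case True
        hence "\<phi> (p x) = \<phi> (q x)" using fun_cong[OF e, of x] by simp
        moreover have "p x \<in> A" "q x \<in> A" using p q True by (auto simp: permutes_in_image)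
        ultimately show ?thesis using phi by (auto simp: bij_betw_def inj_on_def)
      next
        case False thus ?thesis using p q by (simp add: permutes_not_in)
      qed
    qed
  qed
  show ?thesis unfolding eq card_image[OF inj] using card_permutations[OF refl assms(1)] .
qed

definition mrg :: "'a set \<Rightarrow> ('a \<Rightarrow> 'a) \<Rightarrow> ('a \<Rightarrow> 'a) \<Rightarrow> 'a \<Rightarrow> 'a" where
  "mrg A g h = (\<lambda>x. if x \<in> A then g x else h x)"

lemma mrg_img1: "A' \<inter> A = {} \<Longrightarrow> mrg A g h ` A' = h ` A'"
  unfolding mrg_def by (rule image_cong) auto

lemma mrg_img2: "mrg A g h ` A = g ` A"
  unfolding mrg_def by (rule image_cong) auto

lemma count_blocks:
  assumes "list_all2 (\<lambda>A B. card A = card B \<and> finite A \<and> finite B) As Bs" "pdisj As"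
  shows "card {f. (\<forall>x. x \<notin> \<Union>(set As) \<longrightarrow> f x = x) \<and> list_all2 (\<lambda>A B. f ` A = B) As Bs}
          = prod_list (map (\<lambda>A. fact (card A)) As)"
  using assms
proof (induction rule: list_all2_induct)
  case Nil
  have e0: "{f. (\<forall>x. x \<notin> \<Union>(set [])  \<longrightarrow> f x = x) \<and> list_all2 (\<lambda>A B. f ` A = B) [] []} = {id}"
    by (auto simp: fun_eq_iff)
  show ?case by (subst e0) simp
next
  case (Cons A As B Bs)
  let ?S = "\<Union>(set As)"
  have AS: "A \<inter> ?S = {}" using Cons.prems by simp
  have fin: "finite A" "finite B" "card A = card B" using Cons.hyps by auto
  define G where "G = {g. (\<forall>x. x \<notin> A \<longrightarrow> g x = x) \<and> g ` A = B}"
  define H where "H = {f. (\<forall>x. x \<notin> ?S \<longrightarrow> f x = x) \<and> list_all2 (\<lambda>A B. f ` A = B) As Bs}"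
  define M where "M = (\<lambda>(g,h). mrg A g h)"
  have IH: "card H = prod_list (map (\<lambda>A. fact (card A)) As)" using Cons.IH Cons.prems H_def by simp
  have eq: "{f. (\<forall>x. x \<notin> \<Union>(set (A#As)) \<longrightarrow> f x = x) \<and> list_all2 (\<lambda>A B. f ` A = B) (A#As) (B#Bs)}
       = M ` (G \<times> H)"
  proof (intro equalityI subsetI)
    fix f assume "f \<in> {f. (\<forall>x. x \<notin> \<Union>(set (A#As)) \<longrightarrow> f x = x) \<and> list_all2 (\<lambda>A B. f ` A = B) (A#As) (B#Bs)}"
    hence f1: "\<forall>x. x \<notin> A \<union> ?S \<longrightarrow> f x = x" and f2: "f ` A = B" and f3: "list_all2 (\<lambda>A B. f ` A = B) As Bs"
      by auto
    define g where "g = mrg A f id"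
    define h where "h = mrg A id f"
    have "g ` A = B" using f2 mrg_img2[of A f id] g_def by simp
    hence "g \<in> G" unfolding G_def g_def mrg_def by auto
    moreover have "h \<in> H"
    proof -
      have "list_all2 (\<lambda>A B. h ` A = B) As Bs"
      proof (rule list.rel_mono_strong[OF f3])
        fix A' B' assume a: "A' \<in> set As" "f ` A' = B'"
        hence "A' \<inter> A = {}" using AS by auto
        thus "h ` A' = B'" using a mrg_img1[of A' A id f] h_def by simp
      qed
      moreover have "\<forall>x. x \<notin> ?S \<longrightarrow> h x = x" using f1 unfolding h_def mrg_def by auto
      ultimately show ?thesis unfolding H_def by blast
    qed
    moreover have "f = M (g, h)" unfolding M_def g_def h_def mrg_def by auto
    ultimately show "f \<in> M ` (G \<times> H)" by blast
  next
    fix f assume "f \<in> M ` (G \<times> H)"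
    then obtain g h where g: "g \<in> G" and h: "h \<in> H" and f: "f = mrg A g h" unfolding M_def by auto
    have "f ` A = B" using g f mrg_img2[of A g h] unfolding G_def by simp
    moreover have "list_all2 (\<lambda>A B. f ` A = B) As Bs"
    proof (rule list.rel_mono_strong)
      show "list_all2 (\<lambda>A B. h ` A = B) As Bs" using h unfolding H_def by blast
      fix A' B' assume a: "A' \<in> set As" "h ` A' = B'"
      hence "A' \<inter> A = {}" using AS by auto
      thus "f ` A' = B'" using f a mrg_img1[of A' A g h] by simp
    qed
    moreover have "\<forall>x. x \<notin> \<Union>(set (A#As)) \<longrightarrow> f x = x" using g h f unfolding G_def H_def mrg_def by auto
    ultimately show "f \<in> {f. (\<forall>x. x \<notin> \<Union>(set (A#As)) \<longrightarrow> f x = x) \<and> list_all2 (\<lambda>A B. f ` A = B) (A#As) (B#Bs)}"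
      by simp
  qed
  have inj: "inj_on M (G \<times> H)"
  proof (rule inj_onI, clarify)
    fix g h g' h' assume g: "g \<in> G" and h: "h \<in> H" and g': "g' \<in> G" and h': "h' \<in> H"
      and e: "M (g,h) = M (g',h')"
    have e': "\<And>x. mrg A g h x = mrg A g' h' x" using e unfolding M_def by simp
    have go: "\<And>x. x \<notin> A \<Longrightarrow> g x = x \<and> g' x = x" using g g' unfolding G_def by blast
    have ho: "\<And>x. x \<notin> ?S \<Longrightarrow> h x = x \<and> h' x = x" using h h' unfolding H_def by blast
    show "g = g' \<and> h = h'"
    proof
      show "g = g'"
      proof
        fix x show "g x = g' x" using e'[of x] go[of x] unfolding mrg_def by (cases "x \<in> A") auto
      qed
      show "h = h'"
      proof
        fix x show "h x = h' x"
        proof (cases "x \<in> A")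
          case True
          hence "x \<notin> ?S" using AS by blast
          thus ?thesis using ho by simp
        next
          case False
          thus ?thesis using e'[of x] unfolding mrg_def by simp
        qed
      qed
    qed
  qed
  show ?case unfolding eq card_image[OF inj] card_cartesian_product IH
    using card_bij_id_out[OF fin] G_def by simp
qed



lemma lv_length: "length (esc_label_vec ss) = sum_list ss"
  unfolding esc_label_vec_def by (simp add: length_concat comp_def map_nth)

lemma lv_set: "x \<in> set (esc_label_vec ss) \<Longrightarrow> 1 \<le> x \<and> x \<le> length ss"
  unfolding esc_label_vec_def by (auto split: if_splits)

lemma lv_count:
  assumes "j < length ss"
  shows "length (filter (\<lambda>x. x = Suc j) (esc_label_vec ss)) = ss ! j"
proof -
  have "length (filter (\<lambda>x. x = Suc j) (esc_label_vec ss))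
      = sum_list (map (\<lambda>j'. if j' = j then ss ! j' else 0) [0..<length ss])"
    unfolding esc_label_vec_def filter_concat length_concat map_map
    by (intro arg_cong[where f=sum_list] map_cong) (auto simp: filter_replicate)
  also have "\<dots> = (\<Sum>j'\<in>{0..<length ss}. if j' = j then ss ! j' else 0)"
    by (simp add: interv_sum_list_conv_sum_set_nat)
  also have "\<dots> = ss ! j" using assms by simp
  finally show ?thesis .
qed

definition Lset :: "nat \<Rightarrow> nat list \<Rightarrow> nat \<Rightarrow> nat set" where
  "Lset n ss j = {q \<in> {1..n}. esc_label_vec ss ! (q - 1) = j}"

lemma Lset_card:
  assumes "sum_list ss = n" "j < length ss"
  shows "card (Lset n ss (Suc j)) = ss ! j"
proof -
  let ?w = "esc_label_vec ss"
  have "Lset n ss (Suc j) = Suc ` {i. i < length ?w \<and> ?w ! i = Suc j}"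
    unfolding Lset_def lv_length assms(1)
  proof (intro equalityI subsetI)
    fix q assume "q \<in> {q \<in> {1..n}. ?w ! (q - 1) = Suc j}"
    thus "q \<in> Suc ` {i. i < n \<and> ?w ! i = Suc j}"
      by (intro image_eqI[of q Suc "q - 1"]) auto
  qed auto
  hence "card (Lset n ss (Suc j)) = card {i. i < length ?w \<and> ?w ! i = Suc j}"
    by (simp add: card_image)
  also have "\<dots> = length (filter (\<lambda>x. x = Suc j) ?w)" by (simp add: length_filter_conv_card)
  also have "\<dots> = ss ! j" using lv_count assms(2) .
  finally show ?thesis .
qed

lemma Lset_sub: "Lset n ss j \<subseteq> {1..n}" unfolding Lset_def by auto

lemma Lset_disj: "j \<noteq> j' \<Longrightarrow> Lset n ss j \<inter> Lset n ss j' = {}" unfolding Lset_def by auto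

lemma Lset_Union:
  assumes "sum_list ss = n"
  shows "\<Union>(set (map (Lset n ss) [1..<Suc (length ss)])) = {1..n}"
proof (intro equalityI subsetI)
  fix q assume q: "q \<in> {1..n}"
  let ?w = "esc_label_vec ss"
  have "q - 1 < length ?w" using q assms lv_length[of ss] by auto
  hence "?w ! (q - 1) \<in> set ?w" by simp
  hence "1 \<le> ?w ! (q - 1) \<and> ?w ! (q - 1) \<le> length ss" by (rule lv_set)
  moreover have "q \<in> Lset n ss (?w ! (q - 1))" using q unfolding Lset_def by simp
  ultimately have m: "?w ! (q - 1) \<in> set [1..<Suc (length ss)]"
    and q2: "q \<in> Lset n ss (?w ! (q - 1))" by auto
  have "Lset n ss (?w ! (q - 1)) \<in> set (map (Lset n ss) [1..<Suc (length ss)])"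
    unfolding set_map by (rule imageI[OF m])
  note this q2
  thus "q \<in> \<Union>(set (map (Lset n ss) [1..<Suc (length ss)]))" by blast
qed (unfold Lset_def, auto)

lemma perm_preimage_image:
  assumes "\<sigma> permutes S" "L \<subseteq> S"
  shows "\<sigma> ` {p \<in> S. \<sigma> p \<in> L} = L"
proof (intro equalityI subsetI)
  fix y assume y: "y \<in> L"
  have "inv \<sigma> y \<in> S" using y assms permutes_in_image[OF permutes_inv[OF assms(1)]] by auto
  moreover have "\<sigma> (inv \<sigma> y) = y" using permutes_inverses[OF assms(1)] by simp
  ultimately show "y \<in> \<sigma> ` {p \<in> S. \<sigma> p \<in> L}" using y by (metis (mono_tags, lifting) image_eqI mem_Collect_eq)
qed auto

lemma perm_preimage_card:
  assumes "\<sigma> permutes S" "L \<subseteq> S"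
  shows "card {p \<in> S. \<sigma> p \<in> L} = card L"
proof -
  have "inj_on \<sigma> {p \<in> S. \<sigma> p \<in> L}" using permutes_inj[OF assms(1)] by (simp add: inj_on_def inj_def)
  thus ?thesis using perm_preimage_image[OF assms] card_image by metis
qed

lemma perm_preimage_eq:
  assumes "\<sigma> permutes S" "L \<subseteq> S" "A \<subseteq> S"
  shows "{p \<in> S. \<sigma> p \<in> L} = A \<longleftrightarrow> \<sigma> ` A = L"
proof
  assume "{p \<in> S. \<sigma> p \<in> L} = A"
  thus "\<sigma> ` A = L" using perm_preimage_image[OF assms(1,2)] by simp
next
  assume e: "\<sigma> ` A = L"
  have "inj \<sigma>" using permutes_inj[OF assms(1)] .
  thus "{p \<in> S. \<sigma> p \<in> L} = A" unfolding e[symmetric] using assms(3) by (auto simp: inj_image_mem_iff)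
qed

lemma Eset_eq:
  assumes "\<sigma> permutes {1..n}"
  shows "{p \<in> {1..n}. esc_label_vec ss ! (\<sigma> p - 1) = j} = {p \<in> {1..n}. \<sigma> p \<in> Lset n ss j}"
  unfolding Lset_def using permutes_in_image[OF assms] by auto

lemma pdisj_map:
  "distinct xs \<Longrightarrow> (\<forall>a\<in>set xs. \<forall>b\<in>set xs. a \<noteq> b \<longrightarrow> F a \<inter> F b = {}) \<Longrightarrow> pdisj (map F xs)"
  by (induction xs) auto

lemma img_Union_all2:
  "list_all2 (\<lambda>A B. f ` A = B) As Bs \<Longrightarrow> f ` \<Union>(set As) = \<Union>(set Bs)"
  by (induction rule: list_all2_induct) (auto simp: image_Un)

lemma length_le_sum_list: "\<forall>s\<in>set ss. 0 < (s::nat) \<Longrightarrow> length ss \<le> sum_list ss"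
  by (induction ss) auto

lemma finite_comps: "finite (esc_comps n)"
proof (rule finite_subset)
  show "esc_comps n \<subseteq> {xs. set xs \<subseteq> {0..n} \<and> length xs \<le> n}"
    unfolding esc_comps_def using length_le_sum_list member_le_sum_list by fastforce
  show "finite {xs. set xs \<subseteq> {0..n} \<and> length xs \<le> n}" by (rule finite_lists_length_le) simp
qed



declare upt_Suc[simp del]

lemma key_sum:
  assumes part: "partition_on {1..n} \<pi>"
  shows "(\<Sum>ss\<in>esc_comps n. esc_seq_weight mu ss *
            real (card {\<sigma>. \<sigma> permutes {1..n} \<and> esc_partition n ss \<sigma> = \<pi>}))
       = fact (card \<pi>) * (\<Prod>B\<in>\<pi>. pmf mu (card B) * fact (card B))"
proof -
  define S where "S = {1..n::nat}"
  define C where "C = esc_comps n"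
  define Dss where "Dss = (\<lambda>ss. {\<sigma>. \<sigma> permutes S \<and> esc_partition n ss \<sigma> = \<pi>})"
  define D where "D = Sigma C Dss"
  define E where "E = (\<lambda>ss (\<sigma>::nat\<Rightarrow>nat) j. {p \<in> S. esc_label_vec ss ! (\<sigma> p - 1) = j})"
  define \<Phi> where "\<Phi> = (\<lambda>(ss, \<sigma>). map (E ss \<sigma>) [1..<Suc (length ss)])"
  define Y where "Y = permutations_of_set \<pi>"
  define wt where "wt = (\<lambda>x::nat list \<times> (nat \<Rightarrow> nat). esc_seq_weight mu (fst x))"
  define c where "c = (\<Prod>B\<in>\<pi>. pmf mu (card B) * fact (card B))"
  have finS: "finite S" unfolding S_def by simp
  have finP: "finite {\<sigma>. \<sigma> permutes S}" by (rule finite_permutations[OF finS])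
  have finC: "finite C" unfolding C_def by (rule finite_comps)
  have finDss: "\<And>ss. finite (Dss ss)" unfolding Dss_def by (rule finite_subset[OF _ finP]) auto
  have finD: "finite D" unfolding D_def using finC finDss by (rule finite_SigmaI)
  have UP: "\<Union>\<pi> = S" and neP: "{} \<notin> \<pi>" and djP: "disjoint \<pi>"
    using part unfolding partition_on_def S_def by auto
  have subP: "\<And>B. B \<in> \<pi> \<Longrightarrow> B \<subseteq> S" using UP by blast
  have finB: "\<And>B. B \<in> \<pi> \<Longrightarrow> finite B" using subP finS finite_subset by blast
  have finpi: "finite \<pi>" using finite_Pow_iff[of S] finS subP by (meson PowI finite_subset subsetI)
  have djP': "\<And>A B. A \<in> \<pi> \<Longrightarrow> B \<in> \<pi> \<Longrightarrow> A \<noteq> B \<Longrightarrow> A \<inter> B = {}"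
    using djP unfolding disjoint_def by blast
  have esc_part_eq: "\<And>ss \<sigma>. esc_partition n ss \<sigma> = set (\<Phi> (ss,\<sigma>))"
    unfolding esc_partition_def \<Phi>_def E_def S_def by (simp del: upt_Suc add: atLeastLessThanSuc_atLeastAtMost)
  have Ceq: "\<And>ss. ss \<in> C \<longleftrightarrow> (\<forall>s\<in>set ss. 0 < s) \<and> sum_list ss = n" unfolding C_def esc_comps_def by simp
  have Eeq: "\<And>ss \<sigma> j. \<sigma> permutes S \<Longrightarrow> E ss \<sigma> j = {p \<in> S. \<sigma> p \<in> Lset n ss j}"
    unfolding E_def S_def by (rule Eset_eq)
  have Ecard: "\<And>ss \<sigma> i. ss \<in> C \<Longrightarrow> \<sigma> permutes S \<Longrightarrow> i < length ss \<Longrightarrow> card (E ss \<sigma> (Suc i)) = ss ! i"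
  proof -
    fix ss \<sigma> i assume a: "ss \<in> C" "\<sigma> permutes S" "i < length ss"
    have "card (E ss \<sigma> (Suc i)) = card (Lset n ss (Suc i))"
      unfolding Eeq[OF a(2)] by (rule perm_preimage_card[OF a(2)]) (unfold S_def, rule Lset_sub)
    also have "\<dots> = ss ! i" using a Ceq by (intro Lset_card) auto
    finally show "card (E ss \<sigma> (Suc i)) = ss ! i" .
  qed
  have Edisj: "\<And>ss \<sigma> j j'. j \<noteq> j' \<Longrightarrow> E ss \<sigma> j \<inter> E ss \<sigma> j' = {}" unfolding E_def by auto

  have step1: "(\<Sum>ss\<in>esc_comps n. esc_seq_weight mu ss *
            real (card {\<sigma>. \<sigma> permutes {1..n} \<and> esc_partition n ss \<sigma> = \<pi>})) = sum wt D"
  proof -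
    have "(\<Sum>ss\<in>esc_comps n. esc_seq_weight mu ss *
            real (card {\<sigma>. \<sigma> permutes {1..n} \<and> esc_partition n ss \<sigma> = \<pi>}))
         = (\<Sum>ss\<in>C. \<Sum>\<sigma>\<in>Dss ss. wt (ss,\<sigma>))"
      unfolding C_def Dss_def wt_def S_def by (simp add: mult.commute)
    also have "\<dots> = sum wt D" unfolding D_def
      using sum.Sigma[OF finC, of Dss "\<lambda>ss \<sigma>. wt (ss,\<sigma>)"] finDss by simp
    finally show ?thesis .
  qed

  have PhiY: "\<Phi> ` D \<subseteq> Y"
  proof clarify
    fix ss \<sigma> assume "(ss, \<sigma>) \<in> D"
    hence ssC: "ss \<in> C" and sp: "\<sigma> permutes S" and pe: "esc_partition n ss \<sigma> = \<pi>"
      unfolding D_def Dss_def by auto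
    have "inj_on (E ss \<sigma>) (set [1..<Suc (length ss)])"
    proof (rule inj_onI)
      fix j j' assume j: "j \<in> set [1..<Suc (length ss)]" and j': "j' \<in> set [1..<Suc (length ss)]"
        and e: "E ss \<sigma> j = E ss \<sigma> j'"
      show "j = j'"
      proof (rule ccontr)
        assume "j \<noteq> j'"
        hence "E ss \<sigma> j = {}" using Edisj[of j j' ss \<sigma>] e by simp
        moreover have "card (E ss \<sigma> (Suc (j - 1))) = ss ! (j - 1)"
          using j by (intro Ecard[OF ssC sp]) auto
        moreover have "ss ! (j - 1) > 0" using j ssC Ceq by auto
        moreover have "Suc (j - 1) = j" using j by auto
        ultimately show False by simp
      qed
    qed
    hence "distinct (\<Phi> (ss, \<sigma>))" unfolding \<Phi>_def by (simp add: distinct_map)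
    moreover have "set (\<Phi> (ss, \<sigma>)) = \<pi>" using pe esc_part_eq by simp
    ultimately show "\<Phi> (ss, \<sigma>) \<in> Y" unfolding Y_def by (intro permutations_of_setI) auto
  qed
  have finY: "finite Y" unfolding Y_def by simp
  have step2: "sum wt D = (\<Sum>bs\<in>Y. sum wt {x \<in> D. \<Phi> x = bs})"
    using sum.group[OF finD finY PhiY, of wt] by simp

  have step3: "sum wt {x \<in> D. \<Phi> x = bs} = c" if bsY: "bs \<in> Y" for bs
  proof -
    have dbs: "distinct bs" and sbs: "set bs = \<pi>" using bsY unfolding Y_def permutations_of_set_def by auto
    define k where "k = length bs"
    define ss0 where "ss0 = map card bs"
    define Ls where "Ls = map (Lset n ss0) [1..<Suc k]"
    define T where "T = {\<sigma>. (\<forall>x. x \<notin> \<Union>(set bs) \<longrightarrow> \<sigma> x = x) \<and> list_all2 (\<lambda>A B. \<sigma> ` A = B) bs Ls}"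
    have lss0: "length ss0 = k" unfolding ss0_def k_def by simp
    have bsnth: "\<And>i. i < k \<Longrightarrow> bs ! i \<in> \<pi>" using sbs unfolding k_def by auto
    have sum0: "sum_list ss0 = n"
    proof -
      have "sum_list ss0 = sum card \<pi>" unfolding ss0_def using dbs sbs
        by (simp add: sum_list_distinct_conv_sum_set)
      also have "\<dots> = card (\<Union>\<pi>)" using djP finB by (simp add: card_Union_disjoint)
      also have "\<dots> = n" using UP unfolding S_def by simp
      finally show ?thesis .
    qed
    have ss0C: "ss0 \<in> C"
    proof -
      have "\<forall>s\<in>set ss0. 0 < s" unfolding ss0_def using sbs neP finB
        by (auto simp: card_gt_0_iff)
      thus ?thesis using Ceq sum0 by simp
    qed
    have cardT: "card T = prod_list (map (\<lambda>A. fact (card A)) bs)" unfolding T_def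
    proof (rule count_blocks)
      show "list_all2 (\<lambda>A B. card A = card B \<and> finite A \<and> finite B) bs Ls"
      proof (rule list_all2_all_nthI)
        show "length bs = length Ls" unfolding Ls_def k_def by (simp del: upt_Suc)
        fix i assume i: "i < length bs"
        have cL: "card (Ls ! i) = ss0 ! i" unfolding Ls_def using i lss0 sum0
          by (simp add: k_def Lset_card nth_upt del: upt_Suc)
        have "finite (Lset n ss0 (Suc i))" by (rule finite_subset[OF Lset_sub]) simp
        moreover have "Ls ! i = Lset n ss0 (Suc i)" unfolding Ls_def using i by (simp add: k_def del: upt_Suc)
        ultimately have fL: "finite (Ls ! i)" by simp
        show "card (bs ! i) = card (Ls ! i) \<and> finite (bs ! i) \<and> finite (Ls ! i)"
          using cL fL
          using i finB bsnth unfolding ss0_def k_def by auto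
      qed
      show "pdisj bs" using pdisj_map[of bs id] dbs djP' sbs by simp
    qed
    have Ubs: "\<Union>(set bs) = S" using sbs UP by simp
    have ULs: "\<Union>(set Ls) = S" unfolding Ls_def S_def using Lset_Union[OF sum0] lss0 by simp
    have Ls_nth: "\<And>i. i < k \<Longrightarrow> Ls ! i = Lset n ss0 (Suc i)" unfolding Ls_def by (simp del: upt_Suc)
    have seteq: "{x \<in> D. \<Phi> x = bs} = (\<lambda>\<sigma>. (ss0, \<sigma>)) ` T"
    proof (intro equalityI subsetI)
      fix x assume x: "x \<in> {x \<in> D. \<Phi> x = bs}"
      then obtain ss \<sigma> where xe: "x = (ss, \<sigma>)" by (cases x)
      have ssC: "ss \<in> C" and sp: "\<sigma> permutes S" and phi: "\<Phi> (ss, \<sigma>) = bs"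
        using x xe unfolding D_def Dss_def by auto
      have bsE: "bs = map (E ss \<sigma>) [1..<Suc (length ss)]" using phi unfolding \<Phi>_def by simp
      hence lk: "length ss = k" unfolding k_def by simp
      have bsi: "\<And>i. i < k \<Longrightarrow> bs ! i = E ss \<sigma> (Suc i)" using bsE lk by (simp del: upt_Suc)
      have sseq: "ss = ss0"
      proof (rule nth_equalityI)
        show "length ss = length ss0" using lk lss0 by simp
        fix i assume "i < length ss"
        thus "ss ! i = ss0 ! i" unfolding ss0_def using bsi Ecard[OF ssC sp] lk
          by (simp add: k_def)
      qed
      have "\<sigma> \<in> T" unfolding T_def
      proof (intro CollectI conjI allI impI)
        fix y assume "y \<notin> \<Union>(set bs)" thus "\<sigma> y = y" using Ubs permutes_not_in[OF sp] by simp
      next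
        show "list_all2 (\<lambda>A B. \<sigma> ` A = B) bs Ls"
        proof (rule list_all2_all_nthI)
          show "length bs = length Ls" unfolding Ls_def k_def by (simp del: upt_Suc)
          fix i assume i: "i < length bs"
          show "\<sigma> ` (bs ! i) = Ls ! i"
            using i bsi[of i] Ls_nth[of i] Eeq[OF sp] sseq perm_preimage_image[OF sp Lset_sub[of n ss0 "Suc i", folded S_def]]
            unfolding k_def by simp
        qed
      qed
      thus "x \<in> (\<lambda>\<sigma>. (ss0, \<sigma>)) ` T" using xe sseq by simp
    next
      fix x assume "x \<in> (\<lambda>\<sigma>. (ss0, \<sigma>)) ` T"
      then obtain \<sigma> where sT: "\<sigma> \<in> T" and xe: "x = (ss0, \<sigma>)" by auto
      have out: "\<And>y. y \<notin> S \<Longrightarrow> \<sigma> y = y" and la: "list_all2 (\<lambda>A B. \<sigma> ` A = B) bs Ls"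
        using sT Ubs unfolding T_def by auto
      have "\<sigma> ` S = S" using img_Union_all2[OF la] Ubs ULs by simp
      hence "inj_on \<sigma> S" by (intro eq_card_imp_inj_on[OF finS]) simp
      hence "bij_betw \<sigma> S S" using \<open>\<sigma> ` S = S\<close> by (simp add: bij_betw_def)
      hence sp: "\<sigma> permutes S" using out by (rule bij_imp_permutes)
      have phi: "\<Phi> (ss0, \<sigma>) = bs"
      proof (rule nth_equalityI)
        show "length (\<Phi> (ss0, \<sigma>)) = length bs" unfolding \<Phi>_def using lss0 k_def by simp
        fix i assume "i < length (\<Phi> (ss0, \<sigma>))"
        hence i: "i < k" unfolding \<Phi>_def using lss0 by simp
        have img: "\<sigma> ` (bs ! i) = Lset n ss0 (Suc i)"
          using list_all2_nthD[OF la, of i] i Ls_nth[of i] unfolding k_def by simp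
        have "E ss0 \<sigma> (Suc i) = bs ! i"
          unfolding Eeq[OF sp]
          using perm_preimage_eq[OF sp Lset_sub[of n ss0 "Suc i", folded S_def] subP[OF bsnth[OF i]]] img
          by simp
        thus "\<Phi> (ss0, \<sigma>) ! i = bs ! i" unfolding \<Phi>_def using i lss0 by (simp del: upt_Suc)
      qed
      have "esc_partition n ss0 \<sigma> = \<pi>" using esc_part_eq phi sbs by simp
      hence "(ss0, \<sigma>) \<in> D" unfolding D_def Dss_def using ss0C sp by simp
      thus "x \<in> {x \<in> D. \<Phi> x = bs}" using xe phi by simp
    qed
    have "sum wt {x \<in> D. \<Phi> x = bs} = (\<Sum>\<sigma>\<in>T. wt (ss0, \<sigma>))"
      unfolding seteq by (subst sum.reindex) (auto simp: inj_on_def)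
    also have "\<dots> = real (card T) * esc_seq_weight mu ss0" unfolding wt_def by simp
    also have "real (card T) = (\<Prod>B\<in>\<pi>. fact (card B))"
      unfolding cardT using dbs sbs by (simp add: prod.distinct_set_conv_list[symmetric] of_nat_prod)
    also have "esc_seq_weight mu ss0 = (\<Prod>B\<in>\<pi>. pmf mu (card B))"
      unfolding esc_seq_weight_def ss0_def using dbs sbs
      by (simp add: prod.distinct_set_conv_list[symmetric] comp_def)
    finally show ?thesis unfolding c_def by (simp add: prod.distrib mult.commute)
  qed
  have "(\<Sum>bs\<in>Y. sum wt {x \<in> D. \<Phi> x = bs}) = real (card Y) * c" using step3 by simp
  also have "card Y = fact (card \<pi>)" unfolding Y_def using finpi by simp
  finally show ?thesis using step1 step2 unfolding c_def by simp
qed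



lemma PE_pos:
  assumes "pmf mu 1 > 0" "n \<ge> 1"
  shows "esc_PE mu n > 0"
proof -
  have mem: "replicate n 1 \<in> esc_comps n" unfolding esc_comps_def by (simp add: sum_list_replicate)
  have pos: "esc_seq_weight mu (replicate n 1) > 0" unfolding esc_seq_weight_def
    using assms by simp
  have nn: "\<And>ss. esc_seq_weight mu ss \<ge> 0" unfolding esc_seq_weight_def
    by (rule prod_list_nonneg) auto
  have "esc_seq_weight mu (replicate n 1) \<le> esc_PE mu n" unfolding esc_PE_def
    by (rule member_le_sum[OF mem]) (auto simp: nn finite_comps)
  thus ?thesis using pos by linarith
qed

lemma esc_prob_nonneg: "esc_prob mu n \<pi> \<ge> 0"
proof -
  have nn: "\<And>ss. esc_seq_weight mu ss \<ge> 0" unfolding esc_seq_weight_def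
    by (rule prod_list_nonneg) auto
  have "esc_PE mu n \<ge> 0" unfolding esc_PE_def by (rule sum_nonneg) (use nn in auto)
  thus ?thesis unfolding esc_prob_def
    by (intro divide_nonneg_nonneg sum_nonneg mult_nonneg_nonneg nn measure_nonneg)
qed

lemma esc_prob_formula:
  assumes part: "partition_on {1..n} \<pi>"
  shows "esc_prob mu n \<pi> = fact (card \<pi>) * (\<Prod>B\<in>\<pi>. pmf mu (card B) * fact (card B))
                             / (fact n * esc_PE mu n)"
proof -
  let ?P = "{\<sigma>. \<sigma> permutes {1..n::nat}}"
  have fin: "finite ?P" by (rule finite_permutations) simp
  have ne: "?P \<noteq> {}" using permutes_id by blast
  have cP: "card ?P = fact n" using card_permutations[of "{1..n}" n] by simp
  have pr: "measure_pmf.prob (esc_perm_pmf n) {\<sigma>. esc_partition n ss \<sigma> = \<pi>}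
        = real (card {\<sigma>. \<sigma> permutes {1..n} \<and> esc_partition n ss \<sigma> = \<pi>}) / fact n" for ss
  proof -
    have "?P \<inter> {\<sigma>. esc_partition n ss \<sigma> = \<pi>} = {\<sigma>. \<sigma> permutes {1..n} \<and> esc_partition n ss \<sigma> = \<pi>}"
      by auto
    thus ?thesis unfolding esc_perm_pmf_def measure_pmf_of_set[OF ne fin] cP by simp
  qed
  have "esc_prob mu n \<pi> = (\<Sum>ss\<in>esc_comps n. esc_seq_weight mu ss *
            real (card {\<sigma>. \<sigma> permutes {1..n} \<and> esc_partition n ss \<sigma> = \<pi>})) / fact n / esc_PE mu n"
    unfolding esc_prob_def pr by (simp add: sum_divide_distrib)
  also have "\<dots> = fact (card \<pi>) * (\<Prod>B\<in>\<pi>. pmf mu (card B) * fact (card B)) / fact n / esc_PE mu n"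
    using key_sum[OF part] by simp
  finally show ?thesis by simp
qed



theorem corollary1:
  fixes mu :: "nat pmf" and n i :: nat and \<rho> :: "nat set set"
  assumes "pmf mu 0 = 0"
    and "pmf mu 1 > 0"
    and "i \<in> {1..n}"
    and "partition_on ({1..n} - {i}) \<rho>"
    and "\<forall>B\<in>\<rho>. pmf mu (card B) > 0"
  shows "\<exists>C>0.
     (\<forall>B\<in>\<rho>. esc_cond mu n i \<rho> (insert (insert i B) (\<rho> - {B}))
                = C * (real (card B + 1) * pmf mu (card B + 1) / pmf mu (card B)))
     \<and> esc_cond mu n i \<rho> (insert {i} \<rho>) = C * (real (card \<rho> + 1) * pmf mu 1)"
proof -
  define S where "S = {1..n}"
  have iS: "i \<in> S" using assms(3) S_def by simp
  have n1: "n \<ge> 1" using assms(3) by simp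
  have finS: "finite S" unfolding S_def by simp
  have U: "\<Union>\<rho> = S - {i}" and ne: "{} \<notin> \<rho>" and dj: "disjoint \<rho>"
    using assms(4) unfolding partition_on_def S_def by auto
  have dj': "\<And>A B. A \<in> \<rho> \<Longrightarrow> B \<in> \<rho> \<Longrightarrow> A \<noteq> B \<Longrightarrow> A \<inter> B = {}"
    using dj unfolding disjoint_def by blast
  have iB: "\<And>B. B \<in> \<rho> \<Longrightarrow> i \<notin> B" using U by blast
  have subB: "\<And>B. B \<in> \<rho> \<Longrightarrow> B \<subseteq> S" using U by blast
  have finB: "\<And>B. B \<in> \<rho> \<Longrightarrow> finite B" using subB finS finite_subset by blast
  have finr: "finite \<rho>" using finS subB by (meson PowI finite_Pow_iff finite_subset subsetI)
  define k where "k = card \<rho>"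
  define Fr where "Fr = (\<Prod>B\<in>\<rho>. pmf mu (card B) * fact (card B))"
  define Z where "Z = fact n * esc_PE mu n"
  define R where "R = esc_prob_rest mu n i \<rho>"
  have Zpos: "Z > 0" unfolding Z_def using PE_pos[OF assms(2) n1] by simp
  have Frpos: "Fr > 0" unfolding Fr_def using assms(5) by (intro prod_pos) simp
  have imgid: "(\<lambda>B. B - {i}) ` \<rho> = \<rho>"
  proof -
    have "(\<lambda>B. B - {i}) ` \<rho> = id ` \<rho>" by (rule image_cong) (use iB in auto)
    thus ?thesis by simp
  qed
  define pn where "pn = insert {i} \<rho>"
  have ni: "{i} \<notin> \<rho>" using iB by blast
  have part_n: "partition_on {1..n} pn" unfolding pn_def S_def[symmetric]
  proof (rule partition_onI)
    show "\<Union>(insert {i} \<rho>) = S" using U iS by auto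
    show "{} \<notin> insert {i} \<rho>" using ne by auto
    fix p q assume "p \<in> insert {i} \<rho>" "q \<in> insert {i} \<rho>" "p \<noteq> q"
    thus "disjnt p q" using dj' iB by (auto simp: disjnt_def)
  qed
  have rm_n: "remove_point i pn = \<rho>" unfolding remove_point_def pn_def using imgid ne by auto
  have card_n: "card pn = k + 1" unfolding pn_def k_def using finr ni by simp
  have prod_n: "(\<Prod>B\<in>pn. pmf mu (card B) * fact (card B)) = pmf mu 1 * Fr"
    unfolding pn_def Fr_def using finr ni by simp
  have prob_n: "esc_prob mu n pn = fact (k + 1) * (pmf mu 1 * Fr) / Z"
    unfolding esc_prob_formula[OF part_n] card_n prod_n Z_def ..
  have prob_n_pos: "esc_prob mu n pn > 0" unfolding prob_n using Zpos Frpos assms(2) by simp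
  have Rpos: "R > 0"
  proof -
    let ?Q = "{\<pi>. partition_on {1..n} \<pi> \<and> remove_point i \<pi> = \<rho>}"
    have "?Q \<subseteq> Pow (Pow {1..n})" by (auto simp: partition_on_def)
    hence finQ: "finite ?Q" by (rule finite_subset) simp
    have "pn \<in> ?Q" using part_n rm_n by simp
    hence "esc_prob mu n pn \<le> R" unfolding R_def esc_prob_rest_def
      by (intro member_le_sum finQ esc_prob_nonneg)
    thus ?thesis using prob_n_pos by linarith
  qed
  define C where "C = fact k * Fr / (Z * R)"
  have Cpos: "C > 0" unfolding C_def using Frpos Zpos Rpos by simp
  have new: "esc_cond mu n i \<rho> (insert {i} \<rho>) = C * (real (card \<rho> + 1) * pmf mu 1)"
  proof -
    have "esc_cond mu n i \<rho> (insert {i} \<rho>) = fact (k + 1) * (pmf mu 1 * Fr) / Z / R"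
      unfolding esc_cond_def using rm_n prob_n unfolding pn_def R_def by simp
    also have "\<dots> = C * (real (card \<rho> + 1) * pmf mu 1)"
      unfolding C_def k_def using Zpos Rpos by (simp add: field_simps)
    finally show ?thesis .
  qed
  have old: "esc_cond mu n i \<rho> (insert (insert i B) (\<rho> - {B}))
                = C * (real (card B + 1) * pmf mu (card B + 1) / pmf mu (card B))" if B: "B \<in> \<rho>" for B
  proof -
    define pB where "pB = insert (insert i B) (\<rho> - {B})"
    have nin: "insert i B \<notin> \<rho> - {B}" using iB by blast
    have part_B: "partition_on {1..n} pB" unfolding pB_def S_def[symmetric]
    proof (rule partition_onI)
      show "\<Union>(insert (insert i B) (\<rho> - {B})) = S" using U iS B by auto
      show "{} \<notin> insert (insert i B) (\<rho> - {B})" using ne by auto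
      have d1: "\<And>q. q \<in> \<rho> - {B} \<Longrightarrow> disjnt (insert i B) q"
      proof -
        fix q assume q: "q \<in> \<rho> - {B}"
        hence "B \<inter> q = {}" "i \<notin> q" using dj'[OF B, of q] iB by auto
        thus "disjnt (insert i B) q" by (auto simp: disjnt_def)
      qed
      fix p q assume p: "p \<in> insert (insert i B) (\<rho> - {B})" and q: "q \<in> insert (insert i B) (\<rho> - {B})"
        and pq: "p \<noteq> q"
      show "disjnt p q"
      proof (cases "p = insert i B")
        case True
        hence "q \<in> \<rho> - {B}" using q pq by simp
        thus ?thesis using d1 True by simp
      next
        case False
        hence p': "p \<in> \<rho> - {B}" using p by simp
        show ?thesis
        proof (cases "q = insert i B")
          case True thus ?thesis using d1[OF p'] by (simp add: disjnt_sym)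
        next
          case False
          hence "q \<in> \<rho>" using q by simp
          thus ?thesis using p' pq dj' by (simp add: disjnt_def)
        qed
      qed
    qed
    have rm_B: "remove_point i pB = \<rho>"
    proof -
      have "(\<lambda>B. B - {i}) ` pB = insert B ((\<lambda>B. B - {i}) ` (\<rho> - {B}))"
        unfolding pB_def using iB[OF B] by auto
      also have "(\<lambda>B. B - {i}) ` (\<rho> - {B}) = \<rho> - {B}" using imgid by auto
      finally show ?thesis unfolding remove_point_def using B ne by auto
    qed
    have k1: "k \<ge> 1" unfolding k_def using B finr by (simp add: Suc_le_eq card_gt_0_iff) blast
    have card_B: "card pB = k" unfolding pB_def k_def using finr nin B k1 k_def
      by (simp add: card_Diff_singleton)
    define Q where "Q = (\<Prod>B\<in>\<rho> - {B}. pmf mu (card B) * fact (card B))"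
    have cB: "card (insert i B) = card B + 1" using finB[OF B] iB[OF B] by simp
    have prod_B: "(\<Prod>B\<in>pB. pmf mu (card B) * fact (card B)) = pmf mu (card B + 1) * fact (card B + 1) * Q"
      unfolding pB_def Q_def using finr nin cB by simp
    have Fr_B: "Fr = pmf mu (card B) * fact (card B) * Q"
      unfolding Fr_def Q_def using prod.remove[OF finr B] by simp
    have "esc_cond mu n i \<rho> pB = fact k * (pmf mu (card B + 1) * fact (card B + 1) * Q) / Z / R"
      unfolding esc_cond_def using rm_B esc_prob_formula[OF part_B] card_B prod_B Z_def R_def by simp
    also have "\<dots> = C * (real (card B + 1) * pmf mu (card B + 1) / pmf mu (card B))"
    proof -
      have "pmf mu (card B) > 0" using assms(5) B by simp
      thus ?thesis unfolding C_def Fr_B using Zpos Rpos by (simp add: field_simps fact_Suc)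
    qed
    finally show ?thesis unfolding pB_def .
  qed
  show ?thesis using Cpos new old by blast
qed


end
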